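(* Assume $\mathcal R_0>1$, let $k$ satisfy $$\frac{\beta_E\nu\nu_E-(\nu_E+\delta_E)\delta_F}{\beta_E\nu\nu_E-(1-\gamma_s)(\nu_E+\delta_E)\delta_F}\,\delta_s<k<\delta_s,$$ and let $\kappa>0$ satisfy $$\frac{\delta_s-k}{k}\le\kappa\le\frac{\gamma_s\delta_F(\nu_E+\delta_E)}{\beta_E\nu\nu_E-\delta_F(\nu_E+\delta_E)}.$$ Then $\mathcal M(\kappa):=\mathcal T_1\cap\mathcal T_2(\kappa)\cap\mathcal T_3$ is positively invariant (for all Filippov solutions) for the closed-loop system $$\dot E=\beta_E F\Big(1-\frac EK\Big)-(\nu_E+\delta_E)E,\quad \dot M=(1-\nu)\nu_E E-\delta_M M,\quad \dot F=\nu\nu_E E\frac{M}{M+\gamma_sM_s}-\delta_F F,\quad \dot M_s=k(M+M_s)-\delta_sM_s.$$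
   Context: Parameters: $\beta_E,\nu_E,\delta_E,\delta_M,\delta_F,\delta_s,K>0$, $\nu\in(0,1)$, $\gamma_s\in(0,1]$, $\delta_s\ge\delta_M$. $\mathcal R_0:=\dfrac{\beta_E\nu\nu_E}{\delta_F(\nu_E+\delta_E)}$. $\mathcal D'=[0,+\infty)^4$ with points $z=(E,M,F,M_s)^T$. Sets: $\mathcal T_1=\{z\in\mathcal D':\beta_EF(1-E/K)\le(\nu_E+\delta_E)E\}$, $\mathcal T_2(\kappa)=\{z\in\mathcal D':M\le\kappa M_s\}$, $\mathcal T_3=\{z\in\mathcal D':(1-\nu)\nu_EE\le\delta_MM\}$. Solutions are Filippov solutions: locally Lipschitz $z:I\to\mathcal D'$ with $\dot z(t)\in\bigcap_{\varepsilon>0}\bigcap_{N}\overline{\mathrm{conv}}\,X\big(((z(t)+\varepsilon B)\cap\mathcal D')\setminus N\big)$ for a.e. $t$, where $X$ is the closed-loop right-hand side, $B$ the unit ball of $\mathbb R^4$, $N$ ranging over Lebesgue-null sets. Positive invariance: every Filippov solution with $z(0)\in\mathcal M(\kappa)$ stays in $\mathcal M(\kappa)$ for all $t\ge0$. *)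

theory Defs
  imports "HOL-Analysis.Analysis"
begin

text \<open>State vector z = (E, M, F, M_s) in real^4, components z$1, z$2, z$3, z$4.\<close>

definition Dprime :: "(real^4) set" where
  "Dprime = {z. \<forall>i. 0 \<le> z $ i}"

definition R0 :: "real \<Rightarrow> real \<Rightarrow> real \<Rightarrow> real \<Rightarrow> real \<Rightarrow> real" where
  "R0 \<beta>E \<nu> \<nu>E \<delta>E \<delta>F = (\<beta>E * \<nu> * \<nu>E) / (\<delta>F * (\<nu>E + \<delta>E))"

definition T1 :: "real \<Rightarrow> real \<Rightarrow> real \<Rightarrow> real \<Rightarrow> (real^4) set" where
  "T1 \<beta>E \<nu>E \<delta>E K = {z \<in> Dprime.
     \<beta>E * z$3 * (1 - z$1 / K) \<le> (\<nu>E + \<delta>E) * z$1}"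

definition T2 :: "real \<Rightarrow> (real^4) set" where
  "T2 \<kappa> = {z \<in> Dprime. z$2 \<le> \<kappa> * z$4}"

definition T3 :: "real \<Rightarrow> real \<Rightarrow> real \<Rightarrow> (real^4) set" where
  "T3 \<nu> \<nu>E \<delta>M = {z \<in> Dprime. (1 - \<nu>) * \<nu>E * z$1 \<le> \<delta>M * z$2}"

definition Mset :: "real \<Rightarrow> real \<Rightarrow> real \<Rightarrow> real \<Rightarrow> real \<Rightarrow> real \<Rightarrow> real \<Rightarrow> (real^4) set" where
  "Mset \<beta>E \<nu>E \<delta>E K \<nu> \<delta>M \<kappa> = T1 \<beta>E \<nu>E \<delta>E K \<inter> T2 \<kappa> \<inter> T3 \<nu> \<nu>E \<delta>M"

text \<open>Closed-loop right-hand side. At M + \<gamma>_s M_s = 0 the division yields 0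
  (Isabelle convention); this is a Lebesgue-null set and is irrelevant for Filippov solutions.\<close>
definition Xcl :: "real \<Rightarrow> real \<Rightarrow> real \<Rightarrow> real \<Rightarrow> real \<Rightarrow> real \<Rightarrow> real \<Rightarrow> real \<Rightarrow> real \<Rightarrow> real
    \<Rightarrow> real^4 \<Rightarrow> real^4" where
  "Xcl \<beta>E \<nu>E \<delta>E \<delta>M \<delta>F \<delta>s K \<nu> \<gamma>s k z =
     vector [ \<beta>E * z$3 * (1 - z$1 / K) - (\<nu>E + \<delta>E) * z$1,
              (1 - \<nu>) * \<nu>E * z$1 - \<delta>M * z$2,
              \<nu> * \<nu>E * z$1 * (z$2 / (z$2 + \<gamma>s * z$4)) - \<delta>F * z$3,
              k * (z$2 + z$4) - \<delta>s * z$4 ]"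

definition filippov_map :: "('a::euclidean_space \<Rightarrow> 'a) \<Rightarrow> 'a set \<Rightarrow> 'a \<Rightarrow> 'a set" where
  "filippov_map X D x = (\<Inter>\<epsilon>\<in>{0<..}. \<Inter>N\<in>null_sets lebesgue.
       closure (convex hull (X ` ((cball x \<epsilon> \<inter> D) - N))))"

definition locally_lipschitz_on :: "real set \<Rightarrow> (real \<Rightarrow> 'a::metric_space) \<Rightarrow> bool" where
  "locally_lipschitz_on I z \<longleftrightarrow>
     (\<forall>t\<in>I. \<exists>u>0. \<exists>L. L-lipschitz_on (cball t u \<inter> I) z)"

definition filippov_solution :: "('a::euclidean_space \<Rightarrow> 'a) \<Rightarrow> 'a set \<Rightarrow> real set \<Rightarrow> (real \<Rightarrow> 'a) \<Rightarrow> bool" where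
  "filippov_solution X D I z \<longleftrightarrow>
     is_interval I \<and> (\<forall>t\<in>I. z t \<in> D) \<and> locally_lipschitz_on I z \<and>
     (AE t in lebesgue. t \<in> I \<longrightarrow>
        (\<exists>v. (z has_vector_derivative v) (at t within I) \<and> v \<in> filippov_map X D (z t)))"

definition positively_invariant :: "('a::euclidean_space \<Rightarrow> 'a) \<Rightarrow> 'a set \<Rightarrow> 'a set \<Rightarrow> bool" where
  "positively_invariant X D S \<longleftrightarrow>
     (\<forall>I z. filippov_solution X D I z \<and> 0 \<in> I \<and> z 0 \<in> S \<longrightarrow> (\<forall>t\<in>I. t \<ge> 0 \<longrightarrow> z t \<in> S))"

end

theory Submission
  imports Defs
begin


lemma local_below:
  fixes f :: "real \<Rightarrow> real"
  assumes d: "(f has_real_derivative D) (at t within J)" and le: "f t \<le> y" and neg: "f t = y \<Longrightarrow> D < 0"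
  shows "\<exists>d>0. \<forall>s\<in>J. t < s \<and> s < t + d \<longrightarrow> f s < y"
proof (cases "f t = y")
  case True
  obtain d where d0: "d > 0" and dd: "\<And>h. h > 0 \<Longrightarrow> t + h \<in> J \<Longrightarrow> h < d \<Longrightarrow> f t > f (t + h)"
    using has_real_derivative_neg_dec_right[OF d neg[OF True]] by blast
  show ?thesis
  proof (intro exI conjI ballI impI)
    fix s assume "s \<in> J" "t < s \<and> s < t + d"
    then show "f s < y" using dd[of "s - t"] True by auto
  qed (rule d0)
next
  case False
  then have lt: "f t < y" using le by simp
  have "continuous (at t within J) f" using d by (rule DERIV_continuous)
  then obtain d where "d > 0" "\<And>s. s \<in> J \<Longrightarrow> dist s t < d \<Longrightarrow> dist (f s) (f t) < y - f t"
    unfolding continuous_within_eps_delta using lt by (meson diff_gt_0_iff_gt)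
  then show ?thesis
    by (intro exI[of _ d]) (auto simp: dist_real_def abs_less_iff)
qed

lemma lip_cont:
  assumes "locally_lipschitz_on I z"
  shows "continuous_on I (z :: real \<Rightarrow> 'a::metric_space)"
  unfolding continuous_on_eq_continuous_within
proof
  fix t assume t: "t \<in> I"
  obtain u L where u: "u > 0" and L: "L-lipschitz_on (cball t u \<inter> I) z"
    using assms t unfolding locally_lipschitz_on_def by blast
  have L0: "L \<ge> 0" using L by (rule lipschitz_on_nonneg)
  show "continuous (at t within I) z"
    unfolding continuous_within_eps_delta
  proof (intro allI impI)
    fix e :: real assume e: "e > 0"
    show "\<exists>d>0. \<forall>s\<in>I. dist s t < d \<longrightarrow> dist (z s) (z t) < e"
    proof (intro exI[of _ "min u (e / (L + 1))"] conjI ballI impI)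
      show "0 < min u (e / (L + 1))" using u e L0 by simp
      fix s assume s: "s \<in> I" "dist s t < min u (e / (L + 1))"
      have "dist (z s) (z t) \<le> L * dist s t"
        using lipschitz_onD[OF L, of s t] s t u by (auto simp: dist_commute)
      also have "\<dots> \<le> L * (e / (L + 1))" using s L0 by (intro mult_left_mono) auto
      also have "\<dots> < e" using e L0 by (simp add: field_simps)
      finally show "dist (z s) (z t) < e" .
    qed
  qed
qed

lemma comp_deriv:
  assumes "(z has_vector_derivative v) (at t within J)"
  shows "((\<lambda>s. z s $ i) has_real_derivative v$i) (at t within J)"
  using bounded_linear.has_vector_derivative[OF bounded_linear_vec_nth assms]
  by (simp add: has_real_derivative_iff_has_vector_derivative)

lemma DERIV_eq': "(f has_real_derivative D) F \<Longrightarrow> D = D' \<Longrightarrow> (f has_real_derivative D') F" by simp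

lemma exp_weight_deriv:
  assumes "(g has_real_derivative Dg) (at t within J)"
  shows "((\<lambda>s. exp (- C * s) * g s - dl * s) has_real_derivative exp (- C * t) * (Dg - C * g t) - dl) (at t within J)"
proof -
  have e: "((\<lambda>s. exp (- C * s)) has_real_derivative exp (- C * t) * (- C)) (at t within J)"
    by (auto intro!: derivative_eq_intros)
  have l: "((\<lambda>s. dl * s) has_real_derivative dl) (at t within J)"
    by (auto intro!: derivative_eq_intros)
  show ?thesis
    by (rule DERIV_eq'[OF DERIV_diff[OF DERIV_mult[OF e assms] l]]) (simp add: algebra_simps)
qed

lemma deriv_g2:
  assumes "(z has_vector_derivative (v::real^4)) (at t within J)"
  shows "((\<lambda>s. z s $ 2 - ka * z s $ 4) has_real_derivative v$2 - ka * v$4) (at t within J)"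
  by (intro DERIV_diff DERIV_cmult comp_deriv[OF assms])

lemma deriv_g1:
  assumes "(z has_vector_derivative (v::real^4)) (at t within J)"
  shows "((\<lambda>s. bE * z s$3 * (1 - z s$1 / K) - c * z s$1) has_real_derivative
     - (bE * z t$3 / K + c) * v$1 + bE * (1 - z t$1 / K) * v$3) (at t within J)"
proof -
  have a: "((\<lambda>s. 1 - z s$1 / K) has_real_derivative 0 - v$1 / K) (at t within J)"
    by (intro DERIV_diff DERIV_const DERIV_cdivide comp_deriv[OF assms])
  have b: "((\<lambda>s. bE * z s$3) has_real_derivative bE * v$3) (at t within J)"
    by (intro DERIV_cmult comp_deriv[OF assms])
  have c: "((\<lambda>s. c * z s$1) has_real_derivative c * v$1) (at t within J)"
    by (intro DERIV_cmult comp_deriv[OF assms])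
  show ?thesis
    by (rule DERIV_eq'[OF DERIV_diff[OF DERIV_mult[OF b a] c]]) (simp add: algebra_simps)
qed

lemma crossing:
  fixes h :: "real \<Rightarrow> real"
  assumes "a < b" "continuous_on {a..b} h" "h a < y" "y < h b"
  shows "\<exists>t. a \<le> t \<and> t < b \<and> h t = y \<and> (\<forall>s. t < s \<and> s \<le> b \<longrightarrow> y < h s)"
proof -
  define S where "S = {t\<in>{a..b}. h t \<le> y}"
  have cl: "closed S" unfolding S_def
    using continuous_closed_preimage[OF assms(2) closed_atLeastAtMost, of "{..y}"]
    by (simp add: vimage_def Int_def conj_commute)
  have ne: "S \<noteq> {}" using assms unfolding S_def by (auto intro!: exI[of _ a])
  have bd: "bdd_above S" unfolding S_def by (auto intro!: bdd_aboveI[of _ b])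
  define t where "t = Sup S"
  have tS: "t \<in> S" unfolding t_def using closed_contains_Sup[OF ne bd cl] .
  have ab: "a \<le> t" "t \<le> b" "h t \<le> y" using tS unfolding S_def by auto
  have tb: "t < b" using ab assms(4) by (cases "t = b") auto
  have above: "y < h s" if "t < s" "s \<le> b" for s
  proof (rule ccontr)
    assume "\<not> y < h s"
    then have "s \<in> S" using that ab unfolding S_def by auto
    then have "s \<le> t" unfolding t_def using bd by (simp add: cSup_upper)
    then show False using that by simp
  qed
  have "h t = y"
  proof (rule ccontr)
    assume "h t \<noteq> y"
    then have "h t < y" using ab by simp
    moreover have "continuous_on {t..b} h" using assms(2) ab by (auto intro: continuous_on_subset)
    ultimately obtain s where s: "t \<le> s" "s \<le> b" "h s = y"
      using IVT'[of h t y b] assms(4) tb by force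
    then have "s \<noteq> t" using \<open>h t < y\<close> by auto
    then show False using above[of s] s by auto
  qed
  then show ?thesis using ab tb above by blast
qed

lemma filippov_bound:
  fixes X :: "real^4 \<Rightarrow> real^4" and lf :: "real^4 \<Rightarrow> real"
  assumes v: "v \<in> filippov_map X D z"
    and lin: "linear lf"
    and bnd: "\<And>y. y \<in> D \<Longrightarrow> lf (X y) \<le> L y"
    and cont: "isCont L z"
  shows "lf v \<le> L z"
proof (rule field_le_epsilon)
  fix e :: real assume "0 < e"
  obtain d where d: "d > 0" "\<And>y. dist y z < d \<Longrightarrow> dist (L y) (L z) < e"
    using cont \<open>0 < e\<close> unfolding continuous_at_eps_delta by (metis dist_commute)
  have "v \<in> closure (convex hull (X ` ((cball z (d/2) \<inter> D) - {})))"
  proof -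
    have "{} \<in> null_sets lebesgue" by simp
    moreover have "d/2 \<in> {0<..}" using d(1) by simp
    ultimately show ?thesis using v unfolding filippov_map_def by blast
  qed
  moreover
  define H where "H = {w. lf w \<le> L z + e}"
  have "closed H" unfolding H_def
    using lin by (intro closed_Collect_le continuous_intros linear_continuous_on linear_conv_bounded_linear[THEN iffD1]) auto
  have "convex H" unfolding H_def convex_def
  proof (intro ballI allI impI)
    fix x y :: "real^4" and u w :: real
    assume xy: "x \<in> {w. lf w \<le> L z + e}" "y \<in> {w. lf w \<le> L z + e}" and uw: "0 \<le> u" "0 \<le> w" "u + w = 1"
    then have "u * lf x + w * lf y \<le> u * (L z + e) + w * (L z + e)"
      by (intro add_mono mult_left_mono) auto
    also have "\<dots> = L z + e" using \<open>u + w = 1\<close> by algebra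
    finally show "u *\<^sub>R x + w *\<^sub>R y \<in> {w. lf w \<le> L z + e}"
      using lin by (simp add: linear_add linear_scale)
  qed
  have "X ` ((cball z (d/2) \<inter> D) - {}) \<subseteq> H"
  proof
    fix x assume "x \<in> X ` ((cball z (d/2) \<inter> D) - {})"
    then obtain y where y: "y \<in> D" "dist z y \<le> d/2" "x = X y" by auto
    have "dist y z < d" using y d(1) by (simp add: dist_commute)
    then have "L y < L z + e" using d(2)[of y] by (simp add: dist_real_def abs_less_iff)
    then show "x \<in> H" using bnd[OF y(1)] y(3) unfolding H_def by simp
  qed
  then have "closure (convex hull (X ` ((cball z (d/2) \<inter> D) - {}))) \<subseteq> H"
    using \<open>closed H\<close> \<open>convex H\<close> by (meson closure_minimal convex_hull_subset hull_minimal subset_trans convex_hull_eq)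
  ultimately show "lf v \<le> L z + e" unfolding H_def by auto
qed

lemma exp_lip:
  fixes C x y :: real
  assumes "C \<ge> 0" "x \<ge> 0" "y \<ge> 0"
  shows "\<bar>exp (- C * y) - exp (- C * x)\<bar> \<le> C * \<bar>y - x\<bar>"
proof -
  have key: "exp (- C * a) - exp (- C * b) \<le> C * (b - a)" if "0 \<le> a" "a \<le> b" for a b
  proof -
    have "exp (- C * a) - exp (- C * b) = exp (- C * a) * (1 - exp (- (C * (b - a))))"
      by (simp add: algebra_simps flip: exp_add)
    also have "\<dots> \<le> 1 * (C * (b - a))"
    proof (rule mult_mono)
      show "exp (- C * a) \<le> 1" using assms that by (simp add: mult_nonneg_nonneg)
      show "1 - exp (- (C * (b - a))) \<le> C * (b - a)"
        using exp_ge_add_one_self[of "- (C * (b - a))"] by linarith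
      show "0 \<le> 1 - exp (- (C * (b - a)))" using assms that by (simp add: mult_nonneg_nonneg)
    qed auto
    finally show ?thesis by simp
  qed
  have mono: "exp (- C * b) \<le> exp (- C * a)" if "a \<le> b" for a b
    using assms that by (simp add: mult_left_mono)
  show ?thesis
  proof (cases "x \<le> y")
    case True then show ?thesis using key[of x y] mono[of x y] assms by (simp add: abs_if)
  next
    case False then show ?thesis using key[of y x] mono[of y x] assms by (simp add: abs_if)
  qed
qed



definition g1 :: "real \<Rightarrow> real \<Rightarrow> real \<Rightarrow> real \<Rightarrow> real^4 \<Rightarrow> real" where
  "g1 bE nE dE K w = bE * w$3 * (1 - w$1 / K) - (nE + dE) * w$1"
definition g2 :: "real \<Rightarrow> real^4 \<Rightarrow> real" where
  "g2 ka w = w$2 - ka * w$4"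
definition g3 :: "real \<Rightarrow> real \<Rightarrow> real \<Rightarrow> real^4 \<Rightarrow> real" where
  "g3 nu nE dM w = (1 - nu) * nE * w$1 - dM * w$2"

lemma Xcl_comp:
  "Xcl bE nE dE dM dF ds K nu gs k w $ 1 = g1 bE nE dE K w"
  "Xcl bE nE dE dM dF ds K nu gs k w $ 2 = g3 nu nE dM w"
  "Xcl bE nE dE dM dF ds K nu gs k w $ 3 = nu * nE * w$1 * (w$2 / (w$2 + gs * w$4)) - dF * w$3"
  "Xcl bE nE dE dM dF ds K nu gs k w $ 4 = k * (w$2 + w$4) - ds * w$4"
  by (simp_all add: Xcl_def vector_def g1_def g3_def)

lemma Dprime_comp: "w \<in> Dprime \<Longrightarrow> 0 \<le> w$i" by (simp add: Dprime_def)

lemma Mset_iff: "w \<in> Mset bE nE dE K nu dM ka \<longleftrightarrow>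
   w \<in> Dprime \<and> g1 bE nE dE K w \<le> 0 \<and> g2 ka w \<le> 0 \<and> g3 nu nE dM w \<le> 0"
  by (auto simp: Mset_def T1_def T2_def T3_def g1_def g2_def g3_def)

locale model =
  fixes bE nE dE dM dF ds K nu gs k ka :: real
  assumes bE: "bE > 0" and nE: "nE > 0" and dE: "dE > 0" and dM: "dM > 0" and dF: "dF > 0"
    and ds: "ds > 0" and K: "K > 0" and nu0: "0 < nu" and nu1: "nu < 1" and gs0: "0 < gs"
    and k0: "k > 0" and kds: "k < ds" and ka0: "ka > 0" and kak: "ds - k \<le> ka * k"
    and kaB: "ka * (bE * nu * nE - dF * (nE + dE)) \<le> gs * dF * (nE + dE)"
begin

lemma bound2:
  assumes "w \<in> Dprime"
  shows "Xcl bE nE dE dM dF ds K nu gs k w $ 2 - ka * Xcl bE nE dE dM dF ds K nu gs k w $ 4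
          \<le> g3 nu nE dM w - (ds - k) * g2 ka w"
proof -
  have "w$2 * (ds - k - ka * k) \<le> 0"
    using Dprime_comp[OF assms, of 2] kak by (intro mult_nonneg_nonpos) auto
  moreover have "Xcl bE nE dE dM dF ds K nu gs k w $ 2 - ka * Xcl bE nE dE dM dF ds K nu gs k w $ 4
     - (g3 nu nE dM w - (ds - k) * g2 ka w) = w$2 * (ds - k - ka * k)"
    by (simp add: Xcl_comp g2_def algebra_simps)
  ultimately show ?thesis by linarith
qed

lemma bound3:
  "(1 - nu) * nE * Xcl bE nE dE dM dF ds K nu gs k w $ 1 - dM * Xcl bE nE dE dM dF ds K nu gs k w $ 2
     = (1 - nu) * nE * g1 bE nE dE K w - dM * g3 nu nE dM w"
  by (simp add: Xcl_comp)

definition q0 where "q0 = nu * gs / ((ka + gs) * (1 - nu))"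

lemma ratio_bound:
  assumes "w \<in> Dprime"
  shows "nu * nE * w$1 * (w$2 / (w$2 + gs * w$4))
     \<le> nu * nE * ka / (ka + gs) * w$1 + q0 * (dM * max 0 (g2 ka w) + max 0 (g3 nu nE dM w))"
proof -
  define E M S where "E = w$1" "M = w$2" "S = w$4"
  have E0: "E \<ge> 0" and M0: "M \<ge> 0" and S0: "S \<ge> 0" using Dprime_comp[OF assms] unfolding E_M_S_def by auto
  define p where "p = max 0 (g2 ka w)"
  define m3 where "m3 = max 0 (g3 nu nE dM w)"
  have p0: "p \<ge> 0" and m30: "m3 \<ge> 0" unfolding p_def m3_def by auto
  have q00: "q0 \<ge> 0" unfolding q0_def using nu0 nu1 gs0 ka0 by auto
  define Dn where "Dn = M + gs * S"
  have RHS0: "0 \<le> nu * nE * ka / (ka + gs) * E + q0 * (dM * p + m3)"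
    using E0 p0 m30 q00 nu0 nE ka0 gs0 dM by (intro add_nonneg_nonneg mult_nonneg_nonneg) auto
  show ?thesis
  proof (cases "Dn = 0")
    case True
    moreover have "gs * S \<ge> 0" using S0 gs0 by simp
    ultimately have "M = 0" using M0 unfolding Dn_def by linarith
    then show ?thesis using RHS0 unfolding E_M_S_def p_def m3_def by simp
  next
    case False
    moreover have "gs * S \<ge> 0" using S0 gs0 by simp
    ultimately have Dpos: "Dn > 0" using M0 unfolding Dn_def by linarith
    have pM: "p \<le> M" unfolding p_def g2_def E_M_S_def[symmetric] using M0 S0 ka0 by (simp add: mult_nonneg_nonneg)
    have MD: "M \<le> Dn" unfolding Dn_def using S0 gs0 by simp
    have pMS: "M - ka * S \<le> p" unfolding p_def g2_def E_M_S_def[symmetric] by simp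
    have g3eq: "(1 - nu) * nE * E = dM * M + g3 nu nE dM w" unfolding g3_def E_M_S_def[symmetric] by simp
    have g3m: "g3 nu nE dM w \<le> m3" unfolding m3_def by simp
    have s1: "M * (ka + gs) \<le> ka * Dn + gs * p"
    proof -
      have "gs * (M - ka * S) \<le> gs * p" using pMS gs0 by (intro mult_left_mono) auto
      then show ?thesis unfolding Dn_def by (simp add: algebra_simps)
    qed
    have s1': "nu * nE * E * (M * (ka + gs)) \<le> nu * nE * E * (ka * Dn + gs * p)"
      using s1 nu0 nE E0 by (intro mult_left_mono) auto
    have s2: "(1 - nu) * nE * E * p \<le> Dn * (dM * p + m3)"
    proof -
      have "(1 - nu) * nE * E * p = (dM * M + g3 nu nE dM w) * p" using g3eq by simp
      also have "\<dots> \<le> (dM * M + m3) * p" using g3m p0 by (intro mult_right_mono) auto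
      also have "\<dots> = dM * (M * p) + m3 * p" by (simp add: algebra_simps)
      also have "\<dots> \<le> dM * (Dn * p) + m3 * Dn"
        using MD pM p0 m30 dM M0 \<open>p \<le> M\<close>
        by (intro add_mono mult_left_mono mult_right_mono) auto
      finally show ?thesis by (simp add: algebra_simps)
    qed
    have s2': "nu * gs * ((1 - nu) * nE * E * p) \<le> nu * gs * (Dn * (dM * p + m3))"
      using s2 nu0 gs0 by (intro mult_left_mono) auto
    have big: "(ka + gs) * (1 - nu) * (nu * nE * E * M)
       \<le> (ka + gs) * (1 - nu) * ((nu * nE * ka / (ka + gs) * E + q0 * (dM * p + m3)) * Dn)"
    proof -
      have "(ka + gs) * (1 - nu) * (nu * nE * E * M) = (1 - nu) * (nu * nE * E * (M * (ka + gs)))"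
        by (simp add: algebra_simps)
      also have "\<dots> \<le> (1 - nu) * (nu * nE * E * (ka * Dn + gs * p))"
        using mult_left_mono[OF s1', of "1 - nu"] nu1 by simp
      also have "\<dots> = (1 - nu) * nu * nE * E * ka * Dn + nu * gs * ((1 - nu) * nE * E * p)"
        by (simp add: algebra_simps)
      also have "\<dots> \<le> (1 - nu) * nu * nE * E * ka * Dn + nu * gs * (Dn * (dM * p + m3))"
        using s2' by simp
      also have "\<dots> = (1 - nu) * ((ka + gs) * (nu * nE * ka / (ka + gs))) * E * Dn + ((ka + gs) * (1 - nu) * q0) * (Dn * (dM * p + m3))"
      proof -
        have e1: "(ka + gs) * (1 - nu) * q0 = nu * gs" unfolding q0_def using ka0 gs0 nu1 by simp
        have e2: "(ka + gs) * (nu * nE * ka / (ka + gs)) = nu * nE * ka" using ka0 gs0 by simp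
        show ?thesis unfolding e1 e2 by (simp add: algebra_simps)
      qed
      also have "\<dots> = (ka + gs) * (1 - nu) * ((nu * nE * ka / (ka + gs) * E + q0 * (dM * p + m3)) * Dn)"
        by (simp add: algebra_simps)
      finally show ?thesis .
    qed
    have "nu * nE * E * M \<le> (nu * nE * ka / (ka + gs) * E + q0 * (dM * p + m3)) * Dn"
      using big ka0 gs0 nu1 by (simp add: mult_le_cancel_left_pos)
    then have "nu * nE * E * M / Dn \<le> nu * nE * ka / (ka + gs) * E + q0 * (dM * p + m3)"
      using Dpos by (simp add: pos_divide_le_eq)
    then show ?thesis unfolding E_M_S_def p_def m3_def Dn_def by simp
  qed
qed

definition Gm where "Gm w = max (max (g1 bE nE dE K w) (g2 ka w)) (g3 nu nE dM w)"
definition Cc where "Cc = 1 + (1 - nu) * nE + bE * q0 * (dM + 1)"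

lemma q0_nonneg: "q0 \<ge> 0" unfolding q0_def using nu0 nu1 gs0 ka0 by auto

lemma Cc_ge1: "Cc \<ge> 1"
proof -
  have "(1 - nu) * nE \<ge> 0" using nu1 nE by simp
  moreover have "bE * q0 * (dM + 1) \<ge> 0" using q0_nonneg bE dM by simp
  ultimately show ?thesis unfolding Cc_def by linarith
qed

lemma Cc_pos: "Cc > 0" using Cc_ge1 by simp

lemma g1_pos:
  assumes "w \<in> Dprime" "g1 bE nE dE K w > 0"
  shows "w$1 < K" "nu * nE * ka / (ka + gs) * w$1 - dF * w$3 \<le> 0"
proof -
  have E0: "w$1 \<ge> 0" and F0: "w$3 \<ge> 0" using Dprime_comp[OF assms(1)] by auto
  show EK: "w$1 < K"
  proof (rule ccontr)
    assume "\<not> w$1 < K"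
    then have "1 - w$1 / K \<le> 0" using K by simp
    then have "bE * w$3 * (1 - w$1 / K) \<le> 0" using bE F0 by (simp add: mult_nonneg_nonpos)
    moreover have "(nE + dE) * w$1 \<ge> 0" using nE dE E0 by simp
    ultimately show False using assms(2) unfolding g1_def by linarith
  qed
  have "bE * w$3 * (1 - w$1 / K) \<le> bE * w$3"
  proof -
    have "0 \<le> bE * w$3 * (w$1 / K)" using bE F0 E0 K by simp
    then show ?thesis by (simp add: algebra_simps)
  qed
  then have FE: "(nE + dE) * w$1 \<le> bE * w$3" using assms(2) unfolding g1_def by linarith
  have kb: "bE * nu * nE * ka \<le> dF * (nE + dE) * (ka + gs)"
    using kaB by (simp add: algebra_simps)
  have "bE * (nu * nE * ka * w$1) = (bE * nu * nE * ka) * w$1" by simp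
  also have "\<dots> \<le> (dF * (nE + dE) * (ka + gs)) * w$1" using kb E0 by (rule mult_right_mono)
  also have "\<dots> = dF * (ka + gs) * ((nE + dE) * w$1)" by simp
  also have "\<dots> \<le> dF * (ka + gs) * (bE * w$3)" using FE dF ka0 gs0 by (intro mult_left_mono) auto
  also have "\<dots> = bE * (dF * (ka + gs) * w$3)" by simp
  finally have "nu * nE * ka * w$1 \<le> dF * (ka + gs) * w$3" using bE by simp
  then have "nu * nE * ka * w$1 / (ka + gs) \<le> dF * w$3"
    using ka0 gs0 by (simp add: pos_divide_le_eq mult_ac)
  then show "nu * nE * ka / (ka + gs) * w$1 - dF * w$3 \<le> 0" by simp
qed

definition P1 where "P1 y = nu * nE * ka / (ka + gs) * y$1 + q0 * (dM * max 0 (g2 ka y) + max 0 (g3 nu nE dM y)) - dF * y$3"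

lemma isCont_P1: "isCont P1 z"
  unfolding P1_def g2_def g3_def by (intro continuous_intros)

lemma isCont_g: "isCont (g1 bE nE dE K) z" "isCont (g2 ka) z" "isCont (g3 nu nE dM) z"
  unfolding g1_def g2_def g3_def by (intro continuous_intros; simp add: K[THEN less_imp_neq, symmetric])+

lemma active1:
  assumes w: "w \<in> Dprime" and v: "v \<in> filippov_map (Xcl bE nE dE dM dF ds K nu gs k) Dprime w"
    and act: "g1 bE nE dE K w = Gm w" and pos: "Gm w > 0"
  shows "- (bE * w$3 / K + (nE + dE)) * v$1 + bE * (1 - w$1 / K) * v$3 \<le> Cc * Gm w"
proof -
  define a where "a = bE * (1 - w$1 / K)"
  define b where "b = bE * w$3 / K + (nE + dE)"
  have g1p: "g1 bE nE dE K w > 0" using act pos by simp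
  note gp = g1_pos[OF w g1p]
  have a0: "a \<ge> 0" and a1: "a \<le> bE" unfolding a_def using gp(1) bE K Dprime_comp[OF w, of 1] by auto
  have b0: "b \<ge> 0" unfolding b_def using bE K Dprime_comp[OF w, of 3] nE dE by auto
  define L where "L y = - b * g1 bE nE dE K y + a * P1 y" for y
  have lin: "linear (\<lambda>x::real^4. - b * x$1 + a * x$3)"
    by (rule linearI) (simp_all add: algebra_simps)
  have "- b * v$1 + a * v$3 \<le> L w"
  proof (rule filippov_bound[OF v lin])
    fix y assume y: "y \<in> Dprime"
    have "Xcl bE nE dE dM dF ds K nu gs k y $ 3 \<le> P1 y"
      using ratio_bound[OF y] unfolding Xcl_comp P1_def by simp
    then show "- b * Xcl bE nE dE dM dF ds K nu gs k y $ 1 + a * Xcl bE nE dE dM dF ds K nu gs k y $ 3 \<le> L y"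
      unfolding L_def Xcl_comp using a0 by (simp add: mult_left_mono)
  next
    show "isCont L w" unfolding L_def by (intro continuous_intros isCont_g isCont_P1)
  qed
  also have "L w \<le> bE * q0 * (dM + 1) * Gm w"
  proof -
    have m2: "max 0 (g2 ka w) \<le> Gm w" and m3: "max 0 (g3 nu nE dM w) \<le> Gm w"
      using pos unfolding Gm_def by auto
    have "dM * max 0 (g2 ka w) + max 0 (g3 nu nE dM w) \<le> (dM + 1) * Gm w"
    proof -
      have "dM * max 0 (g2 ka w) + max 0 (g3 nu nE dM w) \<le> dM * Gm w + Gm w"
        using m3 mult_left_mono[OF m2 less_imp_le[OF dM]] by linarith
      then show ?thesis by (simp add: algebra_simps)
    qed
    then have "q0 * (dM * max 0 (g2 ka w) + max 0 (g3 nu nE dM w)) \<le> q0 * ((dM + 1) * Gm w)"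
      using q0_nonneg by (rule mult_left_mono)
    then have P: "P1 w \<le> q0 * ((dM + 1) * Gm w)" using gp(2) unfolding P1_def by linarith
    have Pn: "0 \<le> q0 * ((dM + 1) * Gm w)" using q0_nonneg dM pos by simp
    have "a * P1 w \<le> a * (q0 * ((dM + 1) * Gm w))" using P a0 by (rule mult_left_mono)
    also have "\<dots> \<le> bE * (q0 * ((dM + 1) * Gm w))" using a1 Pn by (rule mult_right_mono)
    finally have aP: "a * P1 w \<le> bE * q0 * (dM + 1) * Gm w" by (simp add: mult_ac)
    have "b * g1 bE nE dE K w \<ge> 0" using b0 g1p by simp
    then show ?thesis unfolding L_def using aP by linarith
  qed
  also have "\<dots> \<le> Cc * Gm w"
    unfolding Cc_def using pos nu1 nE by (simp add: mult_right_mono distrib_right)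
  finally show ?thesis unfolding a_def b_def by simp
qed

lemma active2:
  assumes w: "w \<in> Dprime" and v: "v \<in> filippov_map (Xcl bE nE dE dM dF ds K nu gs k) Dprime w"
    and act: "g2 ka w = Gm w" and pos: "Gm w > 0"
  shows "v$2 - ka * v$4 \<le> Cc * Gm w"
proof -
  define L where "L y = g3 nu nE dM y - (ds - k) * g2 ka y" for y
  have lin: "linear (\<lambda>x::real^4. x$2 - ka * x$4)"
    by (rule linearI) (simp_all add: algebra_simps)
  have "v$2 - ka * v$4 \<le> L w"
  proof (rule filippov_bound[OF v lin])
    fix y assume y: "y \<in> Dprime"
    show "Xcl bE nE dE dM dF ds K nu gs k y $ 2 - ka * Xcl bE nE dE dM dF ds K nu gs k y $ 4 \<le> L y"
      using bound2[OF y] unfolding L_def .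
  next
    show "isCont L w" unfolding L_def by (intro continuous_intros isCont_g)
  qed
  also have "L w \<le> Gm w"
  proof -
    have "g3 nu nE dM w \<le> Gm w" unfolding Gm_def by simp
    moreover have "(ds - k) * g2 ka w \<ge> 0" using act pos kds by simp
    ultimately show ?thesis unfolding L_def by linarith
  qed
  also have "\<dots> \<le> Cc * Gm w" using mult_right_mono[OF Cc_ge1, of "Gm w"] pos by simp
  finally show ?thesis .
qed

lemma active3:
  assumes w: "w \<in> Dprime" and v: "v \<in> filippov_map (Xcl bE nE dE dM dF ds K nu gs k) Dprime w"
    and act: "g3 nu nE dM w = Gm w" and pos: "Gm w > 0"
  shows "(1 - nu) * nE * v$1 - dM * v$2 \<le> Cc * Gm w"
proof -
  define L where "L y = (1 - nu) * nE * g1 bE nE dE K y - dM * g3 nu nE dM y" for y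
  have lin: "linear (\<lambda>x::real^4. (1 - nu) * nE * x$1 - dM * x$2)"
    by (rule linearI) (simp_all add: algebra_simps)
  have "(1 - nu) * nE * v$1 - dM * v$2 \<le> L w"
  proof (rule filippov_bound[OF v lin])
    fix y assume y: "y \<in> Dprime"
    show "(1 - nu) * nE * Xcl bE nE dE dM dF ds K nu gs k y $ 1 - dM * Xcl bE nE dE dM dF ds K nu gs k y $ 2 \<le> L y"
      using bound3 unfolding L_def by simp
  next
    show "isCont L w" unfolding L_def by (intro continuous_intros isCont_g)
  qed
  also have "L w \<le> (1 - nu) * nE * Gm w"
  proof -
    have "g1 bE nE dE K w \<le> Gm w" unfolding Gm_def by simp
    then have "(1 - nu) * nE * g1 bE nE dE K w \<le> (1 - nu) * nE * Gm w"
      using nu1 nE by (intro mult_left_mono) auto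
    moreover have "dM * g3 nu nE dM w \<ge> 0" using act pos dM by simp
    ultimately show ?thesis unfolding L_def by linarith
  qed
  also have "\<dots> \<le> Cc * Gm w"
    unfolding Cc_def using pos q0_nonneg bE dM
    by (intro mult_right_mono) (auto simp: mult_nonneg_nonneg)
  finally show ?thesis .
qed

lemma abs3p: "\<bar>p + q + r\<bar> \<le> \<bar>p\<bar> + \<bar>q\<bar> + \<bar>r\<bar>" for p q r :: real by arith

lemma prod_diff_bound:
  fixes x0 y0 a b n :: real
  assumes "\<bar>a\<bar> \<le> n" "\<bar>b\<bar> \<le> n" "n \<le> 1"
  shows "\<bar>(x0 + a) * (y0 + b) - x0 * y0\<bar> \<le> (\<bar>x0\<bar> + \<bar>y0\<bar> + 1) * n"
proof -
  have n0: "0 \<le> n" using assms(1) by linarith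
  have "(x0 + a) * (y0 + b) - x0 * y0 = x0 * b + a * y0 + a * b" by (simp add: algebra_simps)
  also have "\<bar>\<dots>\<bar> \<le> \<bar>x0\<bar> * \<bar>b\<bar> + \<bar>a\<bar> * \<bar>y0\<bar> + \<bar>a\<bar> * \<bar>b\<bar>"
    using abs3p[of "x0 * b" "a * y0" "a * b"] by (simp only: abs_mult)
  also have "\<dots> \<le> \<bar>x0\<bar> * n + n * \<bar>y0\<bar> + n * 1"
    using assms n0 by (intro add_mono mult_mono) auto
  finally show ?thesis by (simp add: algebra_simps)
qed

lemma abs3: "\<bar>p - q - r\<bar> \<le> \<bar>p\<bar> + \<bar>q\<bar> + \<bar>r\<bar>" for p q r :: real by arith
lemma abs3': "\<bar>p + q - r\<bar> \<le> \<bar>p\<bar> + \<bar>q\<bar> + \<bar>r\<bar>" for p q r :: real by arith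
lemma abs2: "\<bar>p - q\<bar> \<le> \<bar>p\<bar> + \<bar>q\<bar>" for p q :: real by arith

lemma comp_diff: "\<bar>w$i - w0$i\<bar> \<le> norm (w - w0)"
  using component_le_norm_cart[of "w - w0" i] by simp

lemma g1_lip:
  assumes "norm (w - w0) \<le> 1"
  shows "\<bar>g1 bE nE dE K w - g1 bE nE dE K w0\<bar>
     \<le> (bE + bE / K * (\<bar>w0$3\<bar> + \<bar>w0$1\<bar> + 1) + (nE + dE)) * norm (w - w0)"
proof -
  define n where "n = norm (w - w0)"
  have a1: "\<bar>w$1 - w0$1\<bar> \<le> n" and a3: "\<bar>w$3 - w0$3\<bar> \<le> n" unfolding n_def by (rule comp_diff)+
  have n1: "n \<le> 1" using assms unfolding n_def .
  have eq: "g1 bE nE dE K w - g1 bE nE dE K w0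
     = bE * (w$3 - w0$3) - bE / K * (w$3 * w$1 - w0$3 * w0$1) - (nE + dE) * (w$1 - w0$1)"
    unfolding g1_def using K by (simp add: field_simps)
  have pd: "\<bar>w$3 * w$1 - w0$3 * w0$1\<bar> \<le> (\<bar>w0$3\<bar> + \<bar>w0$1\<bar> + 1) * n"
    using prod_diff_bound[OF a3 a1 n1, of "w0$3" "w0$1"] by simp
  have "\<bar>g1 bE nE dE K w - g1 bE nE dE K w0\<bar>
     \<le> bE * \<bar>w$3 - w0$3\<bar> + bE / K * \<bar>w$3 * w$1 - w0$3 * w0$1\<bar> + (nE + dE) * \<bar>w$1 - w0$1\<bar>"
    unfolding eq using bE K nE dE abs3[of "bE * (w$3 - w0$3)" "bE / K * (w$3 * w$1 - w0$3 * w0$1)" "(nE + dE) * (w$1 - w0$1)"]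
    by (simp add: abs_mult)
  also have "\<dots> \<le> bE * n + bE / K * ((\<bar>w0$3\<bar> + \<bar>w0$1\<bar> + 1) * n) + (nE + dE) * n"
    using a1 a3 pd bE K nE dE by (intro add_mono mult_left_mono) auto
  finally show ?thesis unfolding n_def by (simp add: algebra_simps)
qed

lemma g2_lip: "\<bar>g2 ka w - g2 ka w0\<bar> \<le> (1 + ka) * norm (w - w0)"
proof -
  have "\<bar>g2 ka w - g2 ka w0\<bar> = \<bar>(w$2 - w0$2) - ka * (w$4 - w0$4)\<bar>" unfolding g2_def by (simp add: algebra_simps)
  also have "\<dots> \<le> \<bar>w$2 - w0$2\<bar> + ka * \<bar>w$4 - w0$4\<bar>" using ka0 abs2[of "w$2 - w0$2" "ka * (w$4 - w0$4)"] by (simp add: abs_mult)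
  also have "\<dots> \<le> norm (w - w0) + ka * norm (w - w0)"
    using ka0 comp_diff by (intro add_mono mult_left_mono) auto
  finally show ?thesis by (simp add: algebra_simps)
qed

lemma g3_lip: "\<bar>g3 nu nE dM w - g3 nu nE dM w0\<bar> \<le> ((1 - nu) * nE + dM) * norm (w - w0)"
proof -
  have "\<bar>g3 nu nE dM w - g3 nu nE dM w0\<bar> = \<bar>(1 - nu) * nE * (w$1 - w0$1) - dM * (w$2 - w0$2)\<bar>" unfolding g3_def by (simp add: algebra_simps)
  also have "\<dots> \<le> (1 - nu) * nE * \<bar>w$1 - w0$1\<bar> + dM * \<bar>w$2 - w0$2\<bar>" using nu1 nE dM abs2[of "(1 - nu) * nE * (w$1 - w0$1)" "dM * (w$2 - w0$2)"] by (simp add: abs_mult)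
  also have "\<dots> \<le> (1 - nu) * nE * norm (w - w0) + dM * norm (w - w0)"
    using nu1 nE dM comp_diff by (intro add_mono mult_left_mono) auto
  finally show ?thesis by (simp add: algebra_simps)
qed

lemma max3_diff: "\<bar>max (max a1 a2) a3 - max (max b1 b2) b3\<bar> \<le> \<bar>a1 - b1\<bar> + \<bar>a2 - b2\<bar> + \<bar>a3 - b3\<bar>"
  for a1 a2 a3 b1 b2 b3 :: real
  by (simp add: max_def abs_if)

lemma Gm_lip: "\<exists>B\<ge>0. \<forall>w. norm (w - w0) \<le> 1 \<longrightarrow> \<bar>Gm w - Gm w0\<bar> \<le> B * norm (w - w0)"
proof (intro exI conjI allI impI)
  let ?B = "(bE + bE / K * (\<bar>w0$3\<bar> + \<bar>w0$1\<bar> + 1) + (nE + dE)) + (1 + ka) + ((1 - nu) * nE + dM)"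
  show "0 \<le> ?B" using bE K nE dE ka0 nu1 dM by (intro add_nonneg_nonneg) auto
  fix w :: "real^4" assume w: "norm (w - w0) \<le> 1"
  show "\<bar>Gm w - Gm w0\<bar> \<le> ?B * norm (w - w0)"
    unfolding Gm_def using max3_diff[of "g1 bE nE dE K w" "g2 ka w" "g3 nu nE dM w" "g1 bE nE dE K w0" "g2 ka w0" "g3 nu nE dM w0"]
      g1_lip[OF w] g2_lip[of w w0] g3_lip[of w w0]
    by (simp add: distrib_right)
qed

lemma Kne: "K \<noteq> 0" using K by simp

lemma h_loc:
  assumes loc: "locally_lipschitz_on I z" and x: "x \<in> J" and JI: "J \<subseteq> I"
    and Jpos: "\<And>s. s \<in> J \<Longrightarrow> s \<ge> 0" and C: "C \<ge> 0"
  shows "\<exists>T B. open T \<and> x \<in> T \<and> (\<forall>y\<in>J \<inter> T.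
     norm ((exp (- C * y) * Gm (z y) - dl * y) - (exp (- C * x) * Gm (z x) - dl * x)) \<le> B * norm (y - x))"
proof -
  obtain u L where u: "u > 0" and L: "L-lipschitz_on (cball x u \<inter> I) z"
    using loc x JI unfolding locally_lipschitz_on_def by blast
  have L0: "L \<ge> 0" using L by (rule lipschitz_on_nonneg)
  obtain B0 where B0: "B0 \<ge> 0" "\<And>w. norm (w - z x) \<le> 1 \<Longrightarrow> \<bar>Gm w - Gm (z x)\<bar> \<le> B0 * norm (w - z x)"
    using Gm_lip[of "z x"] by blast
  define r where "r = min u (1 / (L + 1))"
  have r0: "r > 0" unfolding r_def using u L0 by simp
  show ?thesis
  proof (intro exI conjI ballI)
    show "open (ball x r)" by simp
    show "x \<in> ball x r" using r0 by simp
    fix y assume y: "y \<in> J \<inter> ball x r"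
    have yI: "y \<in> cball x u \<inter> I" and xI: "x \<in> cball x u \<inter> I"
      using y x JI u unfolding r_def by (auto simp: dist_commute)
    have nz: "norm (z y - z x) \<le> L * \<bar>y - x\<bar>"
      using lipschitz_onD[OF L yI xI] by (simp add: dist_norm)
    have yx: "\<bar>y - x\<bar> \<le> 1 / (L + 1)" using y unfolding r_def by (simp add: dist_real_def abs_minus_commute)
    have "L * \<bar>y - x\<bar> \<le> L * (1 / (L + 1))" using yx L0 by (rule mult_left_mono)
    also have "\<dots> \<le> 1" using L0 by (simp add: field_simps)
    finally have n1: "norm (z y - z x) \<le> 1" using nz by linarith
    have dG: "\<bar>Gm (z y) - Gm (z x)\<bar> \<le> B0 * (L * \<bar>y - x\<bar>)"
      using B0(2)[OF n1] mult_left_mono[OF nz B0(1)] by linarith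
    have bG: "\<bar>Gm (z y)\<bar> \<le> \<bar>Gm (z x)\<bar> + B0"
      using B0(2)[OF n1] mult_left_mono[OF n1 B0(1)] by linarith
    have x0: "x \<ge> 0" and y0: "y \<ge> 0" using x y Jpos by auto
    have eL: "\<bar>exp (- C * y) - exp (- C * x)\<bar> \<le> C * \<bar>y - x\<bar>" by (rule exp_lip[OF C x0 y0])
    have ex1: "exp (- C * x) \<le> 1" using C x0 by (simp add: mult_nonneg_nonneg)
    have "(exp (- C * y) * Gm (z y) - dl * y) - (exp (- C * x) * Gm (z x) - dl * x)
       = (exp (- C * y) - exp (- C * x)) * Gm (z y) + exp (- C * x) * (Gm (z y) - Gm (z x)) - dl * (y - x)"
      by (simp add: algebra_simps)
    also have "\<bar>\<dots>\<bar> \<le> \<bar>exp (- C * y) - exp (- C * x)\<bar> * \<bar>Gm (z y)\<bar> + exp (- C * x) * \<bar>Gm (z y) - Gm (z x)\<bar> + \<bar>dl\<bar> * \<bar>y - x\<bar>"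
      using abs3'[of "(exp (- C * y) - exp (- C * x)) * Gm (z y)" "exp (- C * x) * (Gm (z y) - Gm (z x))" "dl * (y - x)"]
      by (simp add: abs_mult)
    also have "\<dots> \<le> (C * \<bar>y - x\<bar>) * (\<bar>Gm (z x)\<bar> + B0) + 1 * (B0 * (L * \<bar>y - x\<bar>)) + \<bar>dl\<bar> * \<bar>y - x\<bar>"
      using eL bG dG ex1 C B0(1) L0 by (intro add_mono mult_mono) auto
    also have "\<dots> = (C * (\<bar>Gm (z x)\<bar> + B0) + B0 * L + \<bar>dl\<bar>) * norm (y - x)"
      by (simp add: algebra_simps)
    finally show "norm ((exp (- C * y) * Gm (z y) - dl * y) - (exp (- C * x) * Gm (z x) - dl * x))
       \<le> (C * (\<bar>Gm (z x)\<bar> + B0) + B0 * L + \<bar>dl\<bar>) * norm (y - x)" by simp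
  qed
qed


end

context model begin
lemma invariant:
  "positively_invariant (Xcl bE nE dE dM dF ds K nu gs k) Dprime (Mset bE nE dE K nu dM ka)"
  unfolding positively_invariant_def
proof (intro allI impI ballI)
  fix I z t1
  assume H: "filippov_solution (Xcl bE nE dE dM dF ds K nu gs k) Dprime I z \<and> 0 \<in> I \<and> z 0 \<in> Mset bE nE dE K nu dM ka"
    and t1I: "t1 \<in> I" and t10: "0 \<le> t1"
  define X where "X = Xcl bE nE dE dM dF ds K nu gs k"
  have sol: "filippov_solution X Dprime I z" and I0: "0 \<in> I" and z0: "z 0 \<in> Mset bE nE dE K nu dM ka"
    using H unfolding X_def by auto
  have isI: "is_interval I" and inD: "\<And>t. t \<in> I \<Longrightarrow> z t \<in> Dprime" and loc: "locally_lipschitz_on I z"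
    and ae: "AE t in lebesgue. t \<in> I \<longrightarrow> (\<exists>v. (z has_vector_derivative v) (at t within I) \<and> v \<in> filippov_map X Dprime (z t))"
    using sol unfolding filippov_solution_def by blast+
  show "z t1 \<in> Mset bE nE dE K nu dM ka"
  proof (rule ccontr)
    assume nM: "z t1 \<notin> Mset bE nE dE K nu dM ka"
    have "\<not> (g1 bE nE dE K (z t1) \<le> 0 \<and> g2 ka (z t1) \<le> 0 \<and> g3 nu nE dM (z t1) \<le> 0)"
      using nM inD[OF t1I] Mset_iff by blast
    then have G1: "Gm (z t1) > 0" unfolding Gm_def less_max_iff_disj by (auto simp: not_le)
    have "g1 bE nE dE K (z 0) \<le> 0" "g2 ka (z 0) \<le> 0" "g3 nu nE dM (z 0) \<le> 0"
      using z0 Mset_iff by blast+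
    then have G0: "Gm (z 0) \<le> 0" unfolding Gm_def by simp
    have t1pos: "t1 > 0" using G0 G1 t10 by (cases "t1 = 0") auto
    define J where "J = {0..t1}"
    have JI: "J \<subseteq> I"
    proof
      fix s assume "s \<in> J"
      then have "0 \<le> s" "s \<le> t1" unfolding J_def by auto
      then show "s \<in> I" using mem_is_interval_1_I[OF isI I0 t1I] by blast
    qed
    have Jpos: "\<And>s. s \<in> J \<Longrightarrow> s \<ge> 0" unfolding J_def by auto
    define C where "C = Cc"
    have C0: "C > 0" unfolding C_def by (rule Cc_pos)
    define dl where "dl = exp (- C * t1) * Gm (z t1) / (2 * t1)"
    have dl0: "dl > 0" unfolding dl_def using G1 t1pos by simp
    define h where "h s = exp (- C * s) * Gm (z s) - dl * s" for s
    have h0: "h 0 \<le> 0" unfolding h_def using G0 by simp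
    have ht1: "h t1 > 0"
    proof -
      have "dl * t1 = exp (- C * t1) * Gm (z t1) / 2" unfolding dl_def using t1pos by simp
      moreover have "exp (- C * t1) * Gm (z t1) > 0" using G1 by simp
      ultimately show ?thesis unfolding h_def by simp
    qed
    obtain N where N: "\<And>t. t \<in> space lebesgue - N \<Longrightarrow> t \<in> I \<longrightarrow> (\<exists>v. (z has_vector_derivative v) (at t within I) \<and> v \<in> filippov_map X Dprime (z t))"
      and Nnull: "N \<in> null_sets lebesgue"
      using AE_E3[OF ae] by blast
    have negN: "negligible N" using Nnull by (simp add: negligible_iff_null_sets)
    have negNJ: "negligible (N \<inter> J)" using negligible_subset[OF negN Int_lower1] .
    have neghN: "negligible (h ` (N \<inter> J))"
    proof (rule negligible_locally_Lipschitz_image[OF _ negNJ])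
      show "DIM(real) \<le> DIM(real)" by simp
      fix x assume x: "x \<in> N \<inter> J"
      obtain T B where "open T" "x \<in> T" and TB: "\<forall>y\<in>J \<inter> T. norm ((exp (- C * y) * Gm (z y) - dl * y) - (exp (- C * x) * Gm (z x) - dl * x)) \<le> B * norm (y - x)"
        using h_loc[OF loc _ JI Jpos, of x C dl] x C0 by auto
      then show "\<exists>T B. open T \<and> x \<in> T \<and> (\<forall>y\<in>N \<inter> J \<inter> T. norm (h y - h x) \<le> B * norm (y - x))"
        unfolding h_def by blast
    qed
    obtain y where y: "0 < y" "y < h t1" "y \<notin> h ` (N \<inter> J)"
    proof -
      have "\<not> {0<..<h t1} \<subseteq> h ` (N \<inter> J)"
      proof
        assume "{0<..<h t1} \<subseteq> h ` (N \<inter> J)"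
        then have "negligible (box 0 (h t1))" using neghN negligible_subset by (metis box_real(1))
        then have e: "box (0::real) (h t1) = {}" using negligible_interval(2) by blast
        have "h t1 / 2 \<in> box (0::real) (h t1)" using ht1 by simp
        then show False using e by blast
      qed
      then obtain y0 where "y0 \<in> {0<..<h t1}" "y0 \<notin> h ` (N \<inter> J)" by blast
      then show ?thesis using that[of y0] by simp
    qed
    have zc: "continuous_on J z" using lip_cont[OF loc] JI by (rule continuous_on_subset)
    have hc: "continuous_on {0..t1} h"
      unfolding h_def Gm_def g1_def g2_def g3_def J_def[symmetric]
      by (intro continuous_intros zc) (simp add: Kne)
    obtain ts where ts: "0 \<le> ts" "ts < t1" "h ts = y" and above: "\<And>s. ts < s \<and> s \<le> t1 \<Longrightarrow> y < h s"
    proof -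
      have "h 0 < y" using h0 y(1) by linarith
      from crossing[OF t1pos hc this y(2)] obtain ts where
        "0 \<le> ts" "ts < t1" "h ts = y" "\<forall>s. ts < s \<and> s \<le> t1 \<longrightarrow> y < h s" by blast
      then show ?thesis using that by blast
    qed
    have tsJ: "ts \<in> J" using ts unfolding J_def by auto
    have tsI: "ts \<in> I" using tsJ JI by auto
    have tsN: "ts \<notin> N" using y(3) tsJ ts(3) by auto
    obtain v where hz: "(z has_vector_derivative v) (at ts within I)" and vF: "v \<in> filippov_map X Dprime (z ts)"
      using N[of ts] tsN tsI by auto
    have hzJ: "(z has_vector_derivative v) (at ts within J)" using hz JI by (rule has_vector_derivative_within_subset)
    have zD: "z ts \<in> Dprime" using inD tsI by auto
    have eG: "exp (- C * ts) * Gm (z ts) = y + dl * ts" using ts(3) unfolding h_def by simp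
    have Gpos: "Gm (z ts) > 0"
    proof -
      have "y + dl * ts > 0" using y(1) dl0 ts(1) by (simp add: add_pos_nonneg)
      then have "exp (- C * ts) * Gm (z ts) > 0" using eG by simp
      then show ?thesis by (simp add: zero_less_mult_iff)
    qed
    have key: "exp (- C * ts) * g - dl * ts \<le> y \<and> (exp (- C * ts) * g - dl * ts = y \<longrightarrow> exp (- C * ts) * (l - C * g) - dl < 0)"
      if gle: "g \<le> Gm (z ts)" and act: "g = Gm (z ts) \<Longrightarrow> l \<le> C * Gm (z ts)" for g l
    proof (intro conjI impI)
      show "exp (- C * ts) * g - dl * ts \<le> y"
        using mult_left_mono[OF gle less_imp_le[OF exp_gt_zero[of "- C * ts"]]] eG by linarith
      assume "exp (- C * ts) * g - dl * ts = y"
      then have "exp (- C * ts) * g = exp (- C * ts) * Gm (z ts)" using eG by simp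
      then have gG: "g = Gm (z ts)" by simp
      then have "l - C * g \<le> 0" using act by simp
      then have "exp (- C * ts) * (l - C * g) \<le> 0" by (simp add: mult_nonneg_nonpos)
      then show "exp (- C * ts) * (l - C * g) - dl < 0" using dl0 by simp
    qed
    define l1 where "l1 = - (bE * z ts$3 / K + (nE + dE)) * v$1 + bE * (1 - z ts$1 / K) * v$3"
    define l2 where "l2 = v$2 - ka * v$4"
    define l3 where "l3 = (1 - nu) * nE * v$1 - dM * v$2"
    have dg1: "((\<lambda>s. g1 bE nE dE K (z s)) has_real_derivative l1) (at ts within J)"
      unfolding g1_def l1_def by (rule deriv_g1[OF hzJ])
    have dg2: "((\<lambda>s. g2 ka (z s)) has_real_derivative l2) (at ts within J)"
      unfolding g2_def l2_def by (rule deriv_g2[OF hzJ])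
    have dg3: "((\<lambda>s. g3 nu nE dM (z s)) has_real_derivative l3) (at ts within J)"
    proof -
      have "((\<lambda>s. (1 - nu) * nE * z s $ 1 - dM * z s $ 2) has_real_derivative (1 - nu) * nE * v$1 - dM * v$2) (at ts within J)"
        by (intro DERIV_diff DERIV_cmult comp_deriv[OF hzJ])
      then show ?thesis unfolding g3_def l3_def .
    qed
    have k1: "l1 \<le> C * Gm (z ts)" if "g1 bE nE dE K (z ts) = Gm (z ts)"
      using active1[OF zD vF[unfolded X_def] that Gpos] unfolding l1_def C_def .
    have k2: "l2 \<le> C * Gm (z ts)" if "g2 ka (z ts) = Gm (z ts)"
      using active2[OF zD vF[unfolded X_def] that Gpos] unfolding l2_def C_def .
    have k3: "l3 \<le> C * Gm (z ts)" if "g3 nu nE dM (z ts) = Gm (z ts)"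
      using active3[OF zD vF[unfolded X_def] that Gpos] unfolding l3_def C_def .
    have le1: "g1 bE nE dE K (z ts) \<le> Gm (z ts)" and le2: "g2 ka (z ts) \<le> Gm (z ts)"
      and le3: "g3 nu nE dM (z ts) \<le> Gm (z ts)" unfolding Gm_def by auto
    obtain d1 where d1: "d1 > 0" "\<And>s. s \<in> J \<Longrightarrow> ts < s \<and> s < ts + d1 \<Longrightarrow> exp (- C * s) * g1 bE nE dE K (z s) - dl * s < y"
    proof -
      from key[OF le1 k1] have kk: "exp (- C * ts) * g1 bE nE dE K (z ts) - dl * ts \<le> y"
        "exp (- C * ts) * g1 bE nE dE K (z ts) - dl * ts = y \<Longrightarrow> exp (- C * ts) * (l1 - C * g1 bE nE dE K (z ts)) - dl < 0" by auto
      from local_below[OF exp_weight_deriv[OF dg1, of C dl] kk] show ?thesis using that by auto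
    qed
    obtain d2 where d2: "d2 > 0" "\<And>s. s \<in> J \<Longrightarrow> ts < s \<and> s < ts + d2 \<Longrightarrow> exp (- C * s) * g2 ka (z s) - dl * s < y"
    proof -
      from key[OF le2 k2] have kk: "exp (- C * ts) * g2 ka (z ts) - dl * ts \<le> y"
        "exp (- C * ts) * g2 ka (z ts) - dl * ts = y \<Longrightarrow> exp (- C * ts) * (l2 - C * g2 ka (z ts)) - dl < 0" by auto
      from local_below[OF exp_weight_deriv[OF dg2, of C dl] kk] show ?thesis using that by auto
    qed
    obtain d3 where d3: "d3 > 0" "\<And>s. s \<in> J \<Longrightarrow> ts < s \<and> s < ts + d3 \<Longrightarrow> exp (- C * s) * g3 nu nE dM (z s) - dl * s < y"
    proof -
      from key[OF le3 k3] have kk: "exp (- C * ts) * g3 nu nE dM (z ts) - dl * ts \<le> y"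
        "exp (- C * ts) * g3 nu nE dM (z ts) - dl * ts = y \<Longrightarrow> exp (- C * ts) * (l3 - C * g3 nu nE dM (z ts)) - dl < 0" by auto
      from local_below[OF exp_weight_deriv[OF dg3, of C dl] kk] show ?thesis using that by auto
    qed
    define m where "m = min (min d1 d2) (min d3 (t1 - ts))"
    have m: "0 < m" "m \<le> d1" "m \<le> d2" "m \<le> d3" "m \<le> t1 - ts"
      unfolding m_def using d1(1) d2(1) d3(1) ts(2) by auto
    define s where "s = ts + m / 2"
    have s: "ts < s" "s \<le> t1" "s < ts + d1" "s < ts + d2" "s < ts + d3"
      unfolding s_def using m by linarith+
    have sJ: "s \<in> J" using s ts(1) unfolding J_def by auto
    have "Gm (z s) = g1 bE nE dE K (z s) \<or> Gm (z s) = g2 ka (z s) \<or> Gm (z s) = g3 nu nE dM (z s)"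
      unfolding Gm_def by (simp add: max_def)
    then have "h s < y"
    proof (elim disjE)
      assume "Gm (z s) = g1 bE nE dE K (z s)"
      then show "h s < y" unfolding h_def using d1(2)[OF sJ] s(1,3) by simp
    next
      assume "Gm (z s) = g2 ka (z s)"
      then show "h s < y" unfolding h_def using d2(2)[OF sJ] s(1,4) by simp
    next
      assume "Gm (z s) = g3 nu nE dM (z s)"
      then show "h s < y" unfolding h_def using d3(2)[OF sJ] s(1,5) by simp
    qed
    moreover have "y < h s" using above s(1) s(2) by blast
    ultimately show False by linarith
  qed
qed

end
theorem theorem5:
  fixes \<beta>E \<nu>E \<delta>E \<delta>M \<delta>F \<delta>s K \<nu> \<gamma>s k \<kappa> :: real
  assumes "\<beta>E > 0" "\<nu>E > 0" "\<delta>E > 0" "\<delta>M > 0" "\<delta>F > 0" "\<delta>s > 0" "K > 0"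
    and "0 < \<nu>" "\<nu> < 1" "0 < \<gamma>s" "\<gamma>s \<le> 1" "\<delta>s \<ge> \<delta>M"
    and "R0 \<beta>E \<nu> \<nu>E \<delta>E \<delta>F > 1"
    and "(\<beta>E * \<nu> * \<nu>E - (\<nu>E + \<delta>E) * \<delta>F)
           / (\<beta>E * \<nu> * \<nu>E - (1 - \<gamma>s) * (\<nu>E + \<delta>E) * \<delta>F) * \<delta>s < k"
    and "k < \<delta>s"
    and "\<kappa> > 0"
    and "(\<delta>s - k) / k \<le> \<kappa>"
    and "\<kappa> \<le> \<gamma>s * \<delta>F * (\<nu>E + \<delta>E) / (\<beta>E * \<nu> * \<nu>E - \<delta>F * (\<nu>E + \<delta>E))"
  shows "positively_invariant (Xcl \<beta>E \<nu>E \<delta>E \<delta>M \<delta>F \<delta>s K \<nu> \<gamma>s k) Dprime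
           (Mset \<beta>E \<nu>E \<delta>E K \<nu> \<delta>M \<kappa>)"
  proof -
  have den: "\<delta>F * (\<nu>E + \<delta>E) > 0" using assms by simp
  have A: "\<beta>E * \<nu> * \<nu>E - \<delta>F * (\<nu>E + \<delta>E) > 0"
  proof -
    have "1 < (\<beta>E * \<nu> * \<nu>E) / (\<delta>F * (\<nu>E + \<delta>E))" using assms(13) unfolding R0_def .
    then have "\<delta>F * (\<nu>E + \<delta>E) < \<beta>E * \<nu> * \<nu>E" using den by (simp add: less_divide_eq_1_pos)
    then show ?thesis by simp
  qed
  have A': "\<beta>E * \<nu> * \<nu>E - (\<nu>E + \<delta>E) * \<delta>F > 0" using A by (simp add: mult.commute)
  have "(\<nu>E + \<delta>E) * \<delta>F - (1 - \<gamma>s) * (\<nu>E + \<delta>E) * \<delta>F = \<gamma>s * ((\<nu>E + \<delta>E) * \<delta>F)"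
    by (simp add: algebra_simps)
  moreover have "\<gamma>s * ((\<nu>E + \<delta>E) * \<delta>F) \<ge> 0" using assms by simp
  ultimately have B: "\<beta>E * \<nu> * \<nu>E - (1 - \<gamma>s) * (\<nu>E + \<delta>E) * \<delta>F > 0" using A' by linarith
  have "(\<beta>E * \<nu> * \<nu>E - (\<nu>E + \<delta>E) * \<delta>F)
           / (\<beta>E * \<nu> * \<nu>E - (1 - \<gamma>s) * (\<nu>E + \<delta>E) * \<delta>F) * \<delta>s > 0"
    using A' B assms(6) by simp
  then have k0: "k > 0" using assms(14) by linarith
  have kak: "\<delta>s - k \<le> \<kappa> * k" using assms(17) k0 by (simp add: pos_divide_le_eq)
  have kaB: "\<kappa> * (\<beta>E * \<nu> * \<nu>E - \<delta>F * (\<nu>E + \<delta>E)) \<le> \<gamma>s * \<delta>F * (\<nu>E + \<delta>E)"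
    using assms(18) A by (simp add: pos_le_divide_eq)
  have "model \<beta>E \<nu>E \<delta>E \<delta>M \<delta>F \<delta>s K \<nu> \<gamma>s k \<kappa>"
    unfolding model_def using assms k0 kak kaB by auto
  then show ?thesis by (rule model.invariant)
qed

end
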